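(* For each integer $n \ge 2$ and real $\gamma$, consider the infinite graph with vertex set $\mathbb{Z}^+$ in which vertices $1,\ldots,n$ form a complete graph $K_n$, vertices $n,n+1,n+2,\ldots$ form an infinite path (edges $\{k,k+1\}$ for $k\ge n$), and vertex $n$ (the vertex where the path is attached) carries a self-loop of weight $\gamma$. Let $H$ be its adjacency operator on $\ell^2(\mathbb{Z}^+)$: in the standard basis $\{e_j\}$, $\langle e_n,He_n\rangle=\gamma$, $\langle e_i,He_j\rangle=1$ for distinct $i,j\in\{1,\ldots,n\}$, $\langle e_k,He_{k+1}\rangle=\langle e_{k+1},He_k\rangle=1$ for $k\ge n$, all other entries $0$. Let $z_1=n^{-1/2}\sum_{j=1}^n e_j$. If $\gamma = n+\mathcal{O}(1)$, then for $t=\pi/(2\sqrt{n})$, \[ \left|\langle e_n, e^{-itH} z_1\rangle\right| = 1+o(1). \]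
   Context: Asymptotic notation refers to $n\to\infty$, with $\gamma=\gamma_n$ such that $\gamma_n-n$ is bounded. The inner product is $\langle x,y\rangle=\sum_u \overline{x_u}y_u$. *)

theory Defs
  imports Complex_Main
begin

text \<open>Vertices are the positive integers 1,2,3,...; we use nat indices and
  treat index 0 as absent (all matrix entries involving 0 vanish, and all
  vectors considered vanish at 0).\<close>

definition Hent :: "nat \<Rightarrow> real \<Rightarrow> nat \<Rightarrow> nat \<Rightarrow> complex" where
  "Hent n \<gamma> i j =
     (if i = n \<and> j = n then complex_of_real \<gamma>
      else if 1 \<le> i \<and> i \<le> n \<and> 1 \<le> j \<and> j \<le> n \<and> i \<noteq> j then 1
      else if n \<le> i \<and> n \<le> j \<and> (j = i + 1 \<or> i = j + 1) then 1
      else 0)"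

text \<open>Action of the adjacency operator H on a vector (matrix-vector product;
  row i has nonzero entries only in columns 1..max n (i+1), so this sum is exact).\<close>
definition Happ :: "nat \<Rightarrow> real \<Rightarrow> (nat \<Rightarrow> complex) \<Rightarrow> (nat \<Rightarrow> complex)" where
  "Happ n \<gamma> v = (\<lambda>i. \<Sum>j\<in>{1..max n (i + 1)}. Hent n \<gamma> i j * v j)"

text \<open>Component k of e^{-itH} v, via the norm-convergent exponential series
  of the bounded operator H.\<close>
definition expH :: "nat \<Rightarrow> real \<Rightarrow> real \<Rightarrow> (nat \<Rightarrow> complex) \<Rightarrow> nat \<Rightarrow> complex" where
  "expH n \<gamma> t v k = (\<Sum>m. ((- \<i> * complex_of_real t) ^ m / of_nat (fact m)) * ((Happ n \<gamma> ^^ m) v) k)"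

definition z1 :: "nat \<Rightarrow> nat \<Rightarrow> complex" where
  "z1 n j = (if 1 \<le> j \<and> j \<le> n then complex_of_real (1 / sqrt (real n)) else 0)"

end

theory Submission
  imports Defs "HOL-Analysis.Analysis"
begin

lemma Hent_sym: "Hent n g i j = Hent n g j i"
  unfolding Hent_def by auto

lemma Hent_cnj: "cnj (Hent n g i j) = Hent n g i j"
  unfolding Hent_def by auto

lemma Hent_out: "max n (i+1) < j \<Longrightarrow> Hent n g i j = 0"
  unfolding Hent_def by auto

lemma Hent_path: "n < i \<Longrightarrow> Hent n g i j \<noteq> 0 \<Longrightarrow> j = i+1 \<or> i = j+1"
  unfolding Hent_def by (auto split: if_splits)

lemma Hent_norm: "cmod (Hent n g i j) \<le> (if j \<le> n then 1 + \<bar>g\<bar> else 0) + (if j = i+1 then 1 else 0) + (if j = i - 1 \<and> 1 \<le> i then 1 else 0)"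
proof -
  have a: "0 \<le> (if j \<le> n then 1 + \<bar>g\<bar> else (0::real))" "0 \<le> (if j = i+1 then 1 else (0::real))"
     "0 \<le> (if j = i - 1 \<and> 1 \<le> i then 1 else (0::real))" by auto
  show ?thesis
  proof (cases "i = n \<and> j = n")
    case True then show ?thesis using a unfolding Hent_def by auto
  next
    case F1: False
    show ?thesis
    proof (cases "1 \<le> i \<and> i \<le> n \<and> 1 \<le> j \<and> j \<le> n \<and> i \<noteq> j")
      case True then show ?thesis using a F1 unfolding Hent_def by auto
    next
      case F2: False
      show ?thesis
      proof (cases "n \<le> i \<and> n \<le> j \<and> (j = i + 1 \<or> i = j + 1)")
        case True then show ?thesis using a F1 F2 unfolding Hent_def by auto
      next
        case False then show ?thesis using a F1 F2 unfolding Hent_def by auto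
      qed
    qed
  qed
qed

definition RR :: "nat \<Rightarrow> real \<Rightarrow> real" where "RR n g = real n * (1 + \<bar>g\<bar>) + 2"

lemma RR_nonneg: "0 \<le> RR n g" unfolding RR_def by simp

lemma Happ_bound:
  assumes "\<And>j. cmod (v j) \<le> B"
  shows "cmod (Happ n g v i) \<le> RR n g * B"
proof -
  have B0: "0 \<le> B" using assms[of 0] norm_ge_zero order_trans by blast
  let ?J = "{1..max n (i+1)}"
  let ?f = "\<lambda>j. (if j \<le> n then 1 + \<bar>g\<bar> else 0) + (if j = i+1 then 1 else 0) + (if j = i - 1 \<and> 1 \<le> i then 1 else (0::real))"
  have sf: "(\<Sum>j\<in>?J. ?f j) \<le> real n * (1 + \<bar>g\<bar>) + 1 + 1"
  proof -
    have "(\<Sum>j\<in>?J. ?f j) = (\<Sum>j\<in>?J. (if j \<le> n then 1 + \<bar>g\<bar> else 0)) + (\<Sum>j\<in>?J. (if j = i+1 then 1 else 0)) + (\<Sum>j\<in>?J. (if j = i - 1 \<and> 1 \<le> i then 1 else (0::real)))"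
      by (simp add: sum.distrib)
    moreover have "(\<Sum>j\<in>?J. (if j \<le> n then 1 + \<bar>g\<bar> else 0)) = (\<Sum>j\<in>{1..n}. 1 + \<bar>g\<bar>)"
      by (rule sum.mono_neutral_cong_right) auto
    moreover have "(\<Sum>j\<in>?J. (if j = i+1 then 1 else (0::real))) \<le> 1"
      by (simp add: sum.delta)
    moreover have "(\<Sum>j\<in>?J. (if j = i - 1 \<and> 1 \<le> i then 1 else (0::real))) \<le> 1"
    proof (cases "1 \<le> i")
      case True then show ?thesis by (simp add: sum.delta)
    qed simp
    ultimately show ?thesis by simp
  qed
  have "cmod (Happ n g v i) \<le> (\<Sum>j\<in>?J. cmod (Hent n g i j * v j))"
    unfolding Happ_def by (rule norm_sum)
  also have "\<dots> \<le> (\<Sum>j\<in>?J. ?f j * B)"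
    apply (rule sum_mono) unfolding norm_mult
    by (rule mult_mono[OF Hent_norm assms]) (auto simp: B0)
  also have "\<dots> = B * (\<Sum>j\<in>?J. ?f j)" by (simp add: sum_distrib_left mult.commute)
  also have "B * (\<Sum>j\<in>?J. ?f j) \<le> B * RR n g" unfolding RR_def using B0 sf by (intro mult_left_mono) auto
  finally show ?thesis by (simp add: mult.commute)
qed

definition cm :: "nat \<Rightarrow> real \<Rightarrow> nat \<Rightarrow> nat \<Rightarrow> complex" where
  "cm n g m k = (Happ n g ^^ m) (z1 n) k"

lemma cm_0: "cm n g 0 k = z1 n k" by (simp add: cm_def)
lemma cm_Suc: "cm n g (Suc m) k = Happ n g (\<lambda>j. cm n g m j) k"
  by (simp add: cm_def)

lemma z1_bound: "cmod (z1 n k) \<le> 1"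
proof -
  have "1 / sqrt (real n) \<le> 1" if "1 \<le> n"
    using that by (simp add: divide_le_eq_1)
  thus ?thesis unfolding z1_def by (auto simp: norm_divide)
qed

lemma cm_bound: "cmod (cm n g m k) \<le> RR n g ^ m"
proof (induction m arbitrary: k)
  case 0 then show ?case by (simp add: cm_0 z1_bound)
next
  case (Suc m)
  show ?case unfolding cm_Suc using Happ_bound[of "\<lambda>j. cm n g m j" "RR n g ^ m" n g k, OF Suc.IH]
    by simp
qed

lemma cm_supp: "n + m < k \<Longrightarrow> cm n g m k = 0"
proof (induction m arbitrary: k)
  case 0 then show ?case by (simp add: cm_0 z1_def)
next
  case (Suc m)
  have "Hent n g k j * cm n g m j = 0" for j
  proof (cases "Hent n g k j = 0")
    case False
    then have "j = k+1 \<or> k = j+1" using Hent_path[of n k g j] Suc.prems by auto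
    then show ?thesis using Suc.IH[of j] Suc.prems by auto
  qed simp
  then show ?case unfolding cm_Suc Happ_def by (intro sum.neutral) auto
qed

lemma cm_cnj: "cnj (cm n g m k) = cm n g m k"
proof (induction m arbitrary: k)
  case 0 then show ?case by (simp add: cm_0 z1_def)
next
  case (Suc m)
  then show ?case unfolding cm_Suc Happ_def by (simp add: Hent_cnj)
qed

definition PP :: "nat \<Rightarrow> real \<Rightarrow> nat \<Rightarrow> complex \<Rightarrow> complex" where
  "PP n g k x = (\<Sum>m. (cm n g m k / of_nat (fact m)) * x ^ m)"

lemma PP_summable: "summable (\<lambda>m. (cm n g m k / of_nat (fact m)) * x ^ m)"
proof (rule summable_comparison_test)
  show "summable (\<lambda>m. inverse (fact m) * (RR n g * cmod x) ^ m)" by (rule summable_exp)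
  show "\<exists>N. \<forall>m\<ge>N. norm (cm n g m k / of_nat (fact m) * x ^ m) \<le> inverse (fact m) * (RR n g * cmod x) ^ m"
  proof (intro exI allI impI)
    fix m :: nat
    have "norm (cm n g m k / of_nat (fact m) * x ^ m) = cmod (cm n g m k) * cmod x ^ m / fact m"
      by (simp add: norm_mult norm_divide norm_power)
    also have "\<dots> \<le> RR n g ^ m * cmod x ^ m / fact m"
      by (intro divide_right_mono mult_right_mono cm_bound) auto
    finally show "norm (cm n g m k / of_nat (fact m) * x ^ m) \<le> inverse (fact m) * (RR n g * cmod x) ^ m"
      by (simp add: power_mult_distrib divide_inverse mult.commute)
  qed
qed

lemma PP_deriv: "(PP n g k has_field_derivative Happ n g (\<lambda>j. PP n g j x) k) (at x)"
proof -
  let ?c = "\<lambda>m. cm n g m k / of_nat (fact m)"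
  have d: "(PP n g k has_field_derivative (\<Sum>m. diffs ?c m * x^m)) (at x)"
    unfolding PP_def[abs_def] by (rule termdiffs_strong_converges_everywhere) (rule PP_summable)
  have "diffs ?c m * x^m = (\<Sum>j\<in>{1..max n (k+1)}. Hent n g k j * (cm n g m j / of_nat (fact m) * x ^ m))" for m
  proof -
    have "diffs ?c m = cm n g (Suc m) k / of_nat (fact m)"
    proof -
      have x0: "(of_nat (Suc m) :: complex) \<noteq> 0" by (simp del: of_nat_Suc)
      have y0: "(of_nat (fact m) :: complex) \<noteq> 0" by simp
      have "of_nat (Suc m) * (cm n g (Suc m) k / of_nat (fact (Suc m))) = cm n g (Suc m) k / (of_nat (fact m) :: complex)"
        unfolding fact_Suc of_nat_mult using x0 y0 by (simp add: field_simps del: of_nat_Suc)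
      thus ?thesis unfolding diffs_def .
    qed
    thus ?thesis unfolding cm_Suc Happ_def by (simp add: sum_divide_distrib sum_distrib_right sum_distrib_left algebra_simps)
  qed
  hence "(\<Sum>m. diffs ?c m * x^m) = (\<Sum>m. \<Sum>j\<in>{1..max n (k+1)}. Hent n g k j * (cm n g m j / of_nat (fact m) * x ^ m))"
    by simp
  also have "\<dots> = (\<Sum>j\<in>{1..max n (k+1)}. \<Sum>m. Hent n g k j * (cm n g m j / of_nat (fact m) * x ^ m))"
    by (rule suminf_sum) (intro summable_mult PP_summable)
  also have "\<dots> = Happ n g (\<lambda>j. PP n g j x) k"
    unfolding Happ_def PP_def by (intro sum.cong refl suminf_mult PP_summable)
  finally show ?thesis using d by simp
qed

lemma PP_zero: "PP n g k 0 = z1 n k"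
  unfolding PP_def using powser_zero[of "\<lambda>m. cm n g m k / of_nat (fact m)"] by (simp add: cm_0)

lemma PP_cnj: "cnj (PP n g k x) = PP n g k (cnj x)"
proof -
  have "(\<lambda>m. cnj (cm n g m k / of_nat (fact m) * x ^ m)) sums cnj (PP n g k x)"
    unfolding sums_cnj PP_def using PP_summable by (rule summable_sums)
  moreover have "(\<lambda>m. cnj (cm n g m k / of_nat (fact m) * x ^ m)) = (\<lambda>m. cm n g m k / of_nat (fact m) * (cnj x) ^ m)"
    by (rule ext) (simp add: cm_cnj)
  ultimately show ?thesis unfolding PP_def using sums_unique by metis
qed

definition TT :: "nat \<Rightarrow> real \<Rightarrow> real \<Rightarrow> nat \<Rightarrow> real" where
  "TT n g s j = (\<Sum>m. if j \<le> m then (s * RR n g) ^ m / fact m else 0)"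

lemma TT_summable: "summable (\<lambda>m. if j \<le> m then (s * RR n g) ^ m / fact m else (0::real))"
proof (rule summable_comparison_test[OF _ summable_exp[of "\<bar>s * RR n g\<bar>"]])
  have "norm (if j \<le> m then (s * RR n g) ^ m / fact m else (0::real)) \<le> inverse (fact m) * \<bar>s * RR n g\<bar> ^ m" for m
    by (simp add: divide_inverse mult.commute power_abs abs_mult)
  thus "\<exists>N. \<forall>m\<ge>N. norm (if j \<le> m then (s * RR n g) ^ m / fact m else (0::real)) \<le> inverse (fact m) * \<bar>s * RR n g\<bar> ^ m"
    by blast
qed

lemma PP_bound:
  assumes "cmod x \<le> s"
  shows "cmod (PP n g k x) \<le> TT n g s (k - n)"
proof -
  have s0: "0 \<le> s" using assms norm_ge_zero order_trans by blast
  have b: "norm (cm n g m k / of_nat (fact m) * x ^ m) \<le> (if k - n \<le> m then (s * RR n g) ^ m / fact m else 0)" for m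
  proof (cases "k - n \<le> m")
    case True
    have "norm (cm n g m k / of_nat (fact m) * x ^ m) = cmod (cm n g m k) * cmod x ^ m / fact m"
      by (simp add: norm_mult norm_divide norm_power)
    also have "\<dots> \<le> RR n g ^ m * s ^ m / fact m"
      by (rule divide_right_mono, rule mult_mono[OF cm_bound power_mono[OF assms]]) (auto simp: RR_nonneg)
    finally show ?thesis using True by (simp add: power_mult_distrib mult.commute)
  next
    case False
    then show ?thesis by (simp add: cm_supp)
  qed
  have "cmod (PP n g k x) \<le> (\<Sum>m. norm (cm n g m k / of_nat (fact m) * x ^ m))"
    unfolding PP_def
    by (rule summable_norm, rule summable_comparison_test[OF _ TT_summable]) (use b in \<open>intro exI[of _ 0] allI impI, simp only: real_norm_def abs_norm_cancel\<close>)
  also have "\<dots> \<le> TT n g s (k - n)"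
    unfolding TT_def
    by (rule suminf_le[OF b _ TT_summable]) (rule summable_comparison_test[OF _ TT_summable], use b in \<open>intro exI[of _ 0] allI impI, simp only: real_norm_def abs_norm_cancel\<close>)
  finally show ?thesis .
qed

lemma TT_lim: "TT n g s \<longlonglongrightarrow> 0"
proof -
  let ?a = "\<lambda>m. (s * RR n g) ^ m / fact m"
  have sa: "summable ?a" using TT_summable[of 0 s n g] by simp
  have "TT n g s j = suminf ?a - (\<Sum>m<j. ?a m)" for j
  proof -
    have "(\<Sum>m. if m < j then ?a m else 0) = (\<Sum>m<j. ?a m)"
      by (subst suminf_finite[of "{..<j}"]) auto
    moreover have "summable (\<lambda>m. if m < j then ?a m else 0)"
      by (rule summable_finite[of "{..<j}"]) auto
    moreover have "(\<lambda>m. if j \<le> m then ?a m else 0) = (\<lambda>m. ?a m - (if m < j then ?a m else 0))"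
      by auto
    ultimately show ?thesis unfolding TT_def using suminf_diff[OF sa] by metis
  qed
  moreover have "(\<lambda>j. suminf ?a - (\<Sum>m<j. ?a m)) \<longlonglongrightarrow> suminf ?a - suminf ?a"
    by (intro tendsto_intros summable_LIMSEQ sa)
  ultimately have "TT n g s = (\<lambda>j. suminf ?a - (\<Sum>m<j. ?a m))" "(\<lambda>j. suminf ?a - (\<Sum>m<j. ?a m)) \<longlonglongrightarrow> 0"
    by auto
  thus ?thesis by simp
qed

lemma TT_term_nonneg: "0 \<le> s \<Longrightarrow> 0 \<le> (s * RR n g) ^ m / fact m"
  using RR_nonneg[of n g] by simp

lemma TT_le0: "0 \<le> s \<Longrightarrow> TT n g s j \<le> TT n g s 0"
  unfolding TT_def
  by (rule suminf_le[OF _ TT_summable TT_summable]) (simp add: TT_term_nonneg)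

lemma TT_nonneg: "0 \<le> s \<Longrightarrow> 0 \<le> TT n g s j"
  unfolding TT_def
  by (rule suminf_nonneg[OF TT_summable]) (simp add: TT_term_nonneg)

lemma PPc_deriv: "((\<lambda>s. PP n g k (c * s)) has_field_derivative (Happ n g (\<lambda>j. PP n g j (c * s)) k * c)) (at s within S)"
proof -
  have "((\<lambda>s. PP n g k (c * s)) has_field_derivative (Happ n g (\<lambda>j. PP n g j (c * s)) k * c)) (at s)"
    by (rule DERIV_chain2[OF PP_deriv]) (auto intro!: derivative_eq_intros)
  thus ?thesis by (rule has_field_derivative_at_within)
qed

lemma Happ_trunc:
  assumes "n \<le> K" "k \<in> {1..K}"
  shows "Happ n g X k = (\<Sum>j\<in>{1..K}. Hent n g k j * X j) + (if k = K then X (K+1) else 0)"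
proof -
  have "Happ n g X k = (\<Sum>j\<in>{1..K+1}. Hent n g k j * X j)"
    unfolding Happ_def using assms
    by (intro sum.mono_neutral_left) (auto simp: not_le intro!: Hent_out)
  also have "\<dots> = (\<Sum>j\<in>{1..K}. Hent n g k j * X j) + Hent n g k (K+1) * X (K+1)"
    by (simp add: atLeastAtMostSuc_conv)
  also have "Hent n g k (K+1) = (if k = K then 1 else 0)"
    using assms unfolding Hent_def by auto
  finally show ?thesis by simp
qed

lemma flux_identity:
  assumes "n \<le> K" "1 \<le> K"
  shows "(\<Sum>k\<in>{1..K}. Happ n g X k * Y k - X k * Happ n g Y k) = X (K+1) * Y K - X K * Y (K+1)"
proof -
  have "(\<Sum>k\<in>{1..K}. Happ n g X k * Y k - X k * Happ n g Y k)
     = (\<Sum>k\<in>{1..K}. (\<Sum>j\<in>{1..K}. Hent n g k j * X j * Y k) - (\<Sum>j\<in>{1..K}. Hent n g k j * X k * Y j)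
          + (if k = K then X (K+1) * Y K - X K * Y (K+1) else 0))"
    using assms(1) by (intro sum.cong refl) (simp add: Happ_trunc sum_distrib_left sum_distrib_right algebra_simps)
  also have "\<dots> = (\<Sum>k\<in>{1..K}. \<Sum>j\<in>{1..K}. Hent n g k j * X j * Y k) - (\<Sum>k\<in>{1..K}. \<Sum>j\<in>{1..K}. Hent n g k j * X k * Y j)
          + (X (K+1) * Y K - X K * Y (K+1))"
    using assms by (simp add: sum.distrib sum_subtractf)
  also have "(\<Sum>k\<in>{1..K}. \<Sum>j\<in>{1..K}. Hent n g k j * X j * Y k) = (\<Sum>k\<in>{1..K}. \<Sum>j\<in>{1..K}. Hent n g k j * X k * Y j)"
    by (subst sum.swap) (simp add: Hent_sym)
  finally show ?thesis by simp
qed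

definition EE :: "nat \<Rightarrow> real \<Rightarrow> nat \<Rightarrow> complex \<Rightarrow> complex" where
  "EE n g K s = (\<Sum>k\<in>{1..K}. PP n g k (\<i> * s) * PP n g k (- \<i> * s))"

lemma EE_deriv:
  assumes "n \<le> K" "1 \<le> K"
  shows "(EE n g K has_field_derivative
     \<i> * (PP n g (K+1) (\<i> * s) * PP n g K (- \<i> * s) - PP n g K (\<i> * s) * PP n g (K+1) (- \<i> * s))) (at s within S)"
proof -
  let ?X = "\<lambda>j. PP n g j (\<i> * s)" and ?Y = "\<lambda>j. PP n g j (- \<i> * s)"
  have "(EE n g K has_field_derivative
     (\<Sum>k\<in>{1..K}. Happ n g ?X k * \<i> * ?Y k + ?X k * (Happ n g ?Y k * (- \<i>)))) (at s within S)"
    unfolding EE_def[abs_def]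
  proof (rule DERIV_sum)
    fix k
    have "((\<lambda>s. PP n g k (\<i> * s) * PP n g k (- \<i> * s)) has_field_derivative
       ?X k * (Happ n g ?Y k * (- \<i>)) + Happ n g ?X k * \<i> * ?Y k) (at s within S)"
      by (rule DERIV_mult'[OF PPc_deriv PPc_deriv])
    thus "((\<lambda>s. PP n g k (\<i> * s) * PP n g k (- \<i> * s)) has_field_derivative
       Happ n g ?X k * \<i> * ?Y k + ?X k * (Happ n g ?Y k * (- \<i>))) (at s within S)"
      by (simp only: add.commute)
  qed
  also have "(\<Sum>k\<in>{1..K}. Happ n g ?X k * \<i> * ?Y k + ?X k * (Happ n g ?Y k * (- \<i>)))
     = \<i> * (\<Sum>k\<in>{1..K}. Happ n g ?X k * ?Y k - ?X k * Happ n g ?Y k)"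
    by (simp add: sum_distrib_left algebra_simps)
  also have "\<dots> = \<i> * (?X (K+1) * ?Y K - ?X K * ?Y (K+1))"
    by (simp only: flux_identity[OF assms])
  finally show ?thesis .
qed

lemma EE_zero:
  assumes "1 \<le> n" "n \<le> K"
  shows "EE n g K 0 = 1"
proof -
  have "EE n g K 0 = (\<Sum>k\<in>{1..K}. z1 n k * z1 n k)" unfolding EE_def by (simp add: PP_zero)
  also have "\<dots> = (\<Sum>k\<in>{1..n}. complex_of_real (1 / real n))"
  proof (intro sum.mono_neutral_cong_right)
    have "complex_of_real (1 / sqrt (real n)) * complex_of_real (1 / sqrt (real n)) = complex_of_real (1 / real n)"
      unfolding of_real_mult[symmetric] using assms by (simp add: real_sqrt_mult[symmetric])
    thus "\<And>x. x \<in> {1..n} \<Longrightarrow> z1 n x * z1 n x = complex_of_real (1 / real n)"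
      by (auto simp: z1_def)
  qed (use assms in \<open>auto simp: z1_def\<close>)
  also have "\<dots> = 1" using assms by simp
  finally show ?thesis .
qed

lemma EE_real:
  fixes \<sigma> :: real
  shows "EE n g K (of_real \<sigma>) = of_real (\<Sum>k\<in>{1..K}. (cmod (PP n g k (- \<i> * of_real \<sigma>)))^2)"
proof -
  have "PP n g k (\<i> * of_real \<sigma>) = cnj (PP n g k (- \<i> * of_real \<sigma>))" for k
    by (simp add: PP_cnj)
  have "PP n g k (\<i> * of_real \<sigma>) * PP n g k (- \<i> * of_real \<sigma>) = of_real ((cmod (PP n g k (- \<i> * of_real \<sigma>)))^2)" for k
    unfolding complex_norm_square by (simp add: PP_cnj mult.commute)
  thus ?thesis unfolding EE_def of_real_sum by (intro sum.cong refl) simp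
qed

lemma energy_step:
  fixes \<sigma> :: real
  assumes "1 \<le> n" "n \<le> K" "0 \<le> \<sigma>"
  shows "cmod (EE n g K (of_real \<sigma>) - 1) \<le> 2 * TT n g \<sigma> (K - n) * TT n g \<sigma> (K + 1 - n) * \<sigma>"
proof -
  let ?S = "closed_segment 0 (complex_of_real \<sigma>)"
  have K1: "1 \<le> K" using assms by simp
  have "cmod (EE n g K (of_real \<sigma>) - EE n g K 0) \<le> 2 * TT n g \<sigma> (K - n) * TT n g \<sigma> (K + 1 - n) * cmod (of_real \<sigma> - 0)"
  proof (rule field_differentiable_bound[where S = ?S])
    show "convex ?S" by simp
    show "(EE n g K has_field_derivative
     \<i> * (PP n g (K+1) (\<i> * z) * PP n g K (- \<i> * z) - PP n g K (\<i> * z) * PP n g (K+1) (- \<i> * z))) (at z within ?S)" for z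
      by (rule EE_deriv[OF assms(2) K1])
    show "cmod (\<i> * (PP n g (K+1) (\<i> * z) * PP n g K (- \<i> * z) - PP n g K (\<i> * z) * PP n g (K+1) (- \<i> * z)))
        \<le> 2 * TT n g \<sigma> (K - n) * TT n g \<sigma> (K + 1 - n)" if z: "z \<in> ?S" for z
    proof -
      have nz: "cmod z \<le> \<sigma>" using segment_bound[OF z] assms(3) by simp
      have b1: "cmod (PP n g k (\<i> * z)) \<le> TT n g \<sigma> (k - n)" for k
        by (rule PP_bound) (simp add: norm_mult nz)
      have b2: "cmod (PP n g k (- \<i> * z)) \<le> TT n g \<sigma> (k - n)" for k
        by (rule PP_bound) (simp add: norm_mult nz)
      have t0: "0 \<le> TT n g \<sigma> j" for j by (rule TT_nonneg[OF assms(3)])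
      have "cmod (\<i> * (PP n g (K+1) (\<i> * z) * PP n g K (- \<i> * z) - PP n g K (\<i> * z) * PP n g (K+1) (- \<i> * z)))
          \<le> cmod (PP n g (K+1) (\<i> * z)) * cmod (PP n g K (- \<i> * z)) + cmod (PP n g K (\<i> * z)) * cmod (PP n g (K+1) (- \<i> * z))"
      proof -
        have "cmod (\<i> * (PP n g (K+1) (\<i> * z) * PP n g K (- \<i> * z) - PP n g K (\<i> * z) * PP n g (K+1) (- \<i> * z)))
           = cmod (PP n g (K+1) (\<i> * z) * PP n g K (- \<i> * z) - PP n g K (\<i> * z) * PP n g (K+1) (- \<i> * z))"
          by (simp only: norm_mult norm_ii mult_1)
        also have "\<dots> \<le> cmod (PP n g (K+1) (\<i> * z) * PP n g K (- \<i> * z)) + cmod (PP n g K (\<i> * z) * PP n g (K+1) (- \<i> * z))"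
          by (rule norm_triangle_ineq4)
        finally show ?thesis by (simp only: norm_mult)
      qed
      also have "\<dots> \<le> TT n g \<sigma> (K + 1 - n) * TT n g \<sigma> (K - n) + TT n g \<sigma> (K - n) * TT n g \<sigma> (K + 1 - n)"
        by (rule add_mono; rule mult_mono[OF b1 b2 t0 norm_ge_zero])
      finally show ?thesis by simp
    qed
  qed (simp_all)
  thus ?thesis using EE_zero[OF assms(1,2)] assms(3) by simp
qed

lemma energy:
  fixes \<sigma> :: real
  assumes "1 \<le> n" "0 \<le> \<sigma>"
  shows "cmod (PP n g (n+1) (- \<i> * of_real \<sigma>)) \<le> 1"
proof -
  let ?y = "(cmod (PP n g (n+1) (- \<i> * of_real \<sigma>)))^2"
  let ?h = "\<lambda>j. 1 + 2 * TT n g \<sigma> j * TT n g \<sigma> 0 * \<sigma>"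
  have lim: "?h \<longlonglongrightarrow> 1 + 2 * 0 * TT n g \<sigma> 0 * \<sigma>"
    by (intro tendsto_intros TT_lim)
  have "?y \<le> ?h j" if j: "j \<ge> 1" for j
  proof -
    define K where "K = n + j"
    have K: "n \<le> K" "n + 1 \<le> K" using j by (auto simp: K_def)
    have "?y \<le> (\<Sum>k\<in>{1..K}. (cmod (PP n g k (- \<i> * of_real \<sigma>)))^2)"
      using K by (intro member_le_sum) auto
    also have "\<dots> = Re (EE n g K (of_real \<sigma>))" by (simp add: EE_real)
    also have "\<dots> \<le> 1 + cmod (EE n g K (of_real \<sigma>) - 1)"
      using complex_Re_le_cmod[of "EE n g K (of_real \<sigma>) - 1"] by simp
    also have "\<dots> \<le> 1 + 2 * TT n g \<sigma> (K - n) * TT n g \<sigma> (K + 1 - n) * \<sigma>"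
      using energy_step[OF assms(1) K(1) assms(2)] by simp
    also have "\<dots> \<le> ?h j"
    proof -
      have "TT n g \<sigma> (K + 1 - n) \<le> TT n g \<sigma> 0" by (rule TT_le0[OF assms(2)])
      hence "TT n g \<sigma> j * TT n g \<sigma> (K + 1 - n) \<le> TT n g \<sigma> j * TT n g \<sigma> 0"
        by (intro mult_left_mono TT_nonneg assms(2))
      hence "TT n g \<sigma> j * TT n g \<sigma> (K + 1 - n) * \<sigma> \<le> TT n g \<sigma> j * TT n g \<sigma> 0 * \<sigma>"
        by (rule mult_right_mono[OF _ assms(2)])
      moreover have "K - n = j" by (simp add: K_def)
      ultimately show ?thesis by (simp add: mult.assoc)
    qed
    finally show ?thesis .
  qed
  hence "?y \<le> 1" using LIMSEQ_le_const[OF lim, of ?y] by auto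
  thus ?thesis by (simp add: power_le_one_iff abs_le_iff)
qed

lemma alg1:
  fixes X Y d e lp lm a g :: complex
  assumes "d \<noteq> 0" "lp = (a + g + d)/2" "lm = (a + g - d)/2" "e = g - a"
  shows "(\<i>*lp*X - \<i>*lm*Y)/d = \<i>*(a*((X-Y)/d) + ((X+Y)/2 + e*(X-Y)/(2*d)))"
  using assms(1) unfolding assms(2-4) by (simp add: field_simps)

lemma alg2:
  fixes X Y d e lp lm a g m1 :: complex
  assumes "d \<noteq> 0" "lp = (a + g + d)/2" "lm = (a + g - d)/2" "e = g - a" "d*d = e*e + 4*m1"
  shows "(\<i>*lp*X + \<i>*lm*Y)/2 + e*(\<i>*lp*X - \<i>*lm*Y)/(2*d) = \<i>*(m1*((X-Y)/d) + g*((X+Y)/2 + e*(X-Y)/(2*d)))"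
proof -
  have "(\<i>*lp*X + \<i>*lm*Y)/2 + e*(\<i>*lp*X - \<i>*lm*Y)/(2*d) - \<i>*(m1*((X-Y)/d) + g*((X+Y)/2 + e*(X-Y)/(2*d)))
     = \<i> * (X - Y) * ((d*d - e*e - 4*m1) / (4*d))"
    using assms(1) unfolding assms(2-4) by (simp add: field_simps)
  also have "\<dots> = 0" using assms(5) by simp
  finally show ?thesis by simp
qed

definition dl :: "nat \<Rightarrow> real \<Rightarrow> real" where "dl n g = g - (real n - 2)"
definition DD :: "nat \<Rightarrow> real \<Rightarrow> real" where "DD n g = sqrt ((dl n g)^2 + 4 * (real n - 1))"
definition lp :: "nat \<Rightarrow> real \<Rightarrow> real" where "lp n g = (real n - 2 + g + DD n g) / 2"
definition lm :: "nat \<Rightarrow> real \<Rightarrow> real" where "lm n g = (real n - 2 + g - DD n g) / 2"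
definition Ep :: "nat \<Rightarrow> real \<Rightarrow> real \<Rightarrow> complex \<Rightarrow> complex" where
  "Ep n g t s = exp (\<i> * of_real (lp n g) * (s - of_real t))"
definition Em :: "nat \<Rightarrow> real \<Rightarrow> real \<Rightarrow> complex \<Rightarrow> complex" where
  "Em n g t s = exp (\<i> * of_real (lm n g) * (s - of_real t))"
definition pf :: "nat \<Rightarrow> real \<Rightarrow> real \<Rightarrow> complex \<Rightarrow> complex" where
  "pf n g t s = (Ep n g t s - Em n g t s) / of_real (DD n g)"
definition qf :: "nat \<Rightarrow> real \<Rightarrow> real \<Rightarrow> complex \<Rightarrow> complex" where
  "qf n g t s = (Ep n g t s + Em n g t s) / 2 + of_real (dl n g) * (Ep n g t s - Em n g t s) / (2 * of_real (DD n g))"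
definition AA :: "nat \<Rightarrow> real \<Rightarrow> complex \<Rightarrow> complex" where
  "AA n g s = (\<Sum>j\<in>{1..n-1}. PP n g j (- \<i> * s))"
definition Phi :: "nat \<Rightarrow> real \<Rightarrow> real \<Rightarrow> complex \<Rightarrow> complex" where
  "Phi n g t s = pf n g t s * AA n g s + qf n g t s * PP n g n (- \<i> * s)"

lemma DD_ge: "2 \<le> n \<Longrightarrow> 2 \<le> DD n g"
proof -
  assume "2 \<le> n"
  hence "2 \<le> real n" by simp
  moreover have "0 \<le> (dl n g)^2" by simp
  ultimately have "4 \<le> (dl n g)^2 + 4 * (real n - 1)" by (smt (verit))
  hence "sqrt 4 \<le> DD n g" unfolding DD_def by (rule real_sqrt_le_mono)
  thus ?thesis by simp
qed

lemma DD_sq: "1 \<le> n \<Longrightarrow> DD n g * DD n g = dl n g * dl n g + 4 * (real n - 1)"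
  unfolding DD_def by (simp add: power2_eq_square[symmetric])

lemma Ep_deriv: "(Ep n g t has_field_derivative \<i> * of_real (lp n g) * Ep n g t s) (at s within S)"
  unfolding Ep_def[abs_def] by (auto intro!: derivative_eq_intros)
lemma Em_deriv: "(Em n g t has_field_derivative \<i> * of_real (lm n g) * Em n g t s) (at s within S)"
  unfolding Em_def[abs_def] by (auto intro!: derivative_eq_intros)

lemma pf_deriv:
  assumes "2 \<le> n"
  shows "(pf n g t has_field_derivative \<i> * ((of_real (real n) - 2) * pf n g t s + qf n g t s)) (at s within S)"
proof -
  have d0: "(of_real (DD n g) :: complex) \<noteq> 0" using DD_ge[OF assms, of g] by auto
  have "(pf n g t has_field_derivative (\<i> * of_real (lp n g) * Ep n g t s - \<i> * of_real (lm n g) * Em n g t s) / of_real (DD n g)) (at s within S)"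
    unfolding pf_def[abs_def] by (intro DERIV_cdivide DERIV_diff Ep_deriv Em_deriv)
  moreover have "(\<i> * of_real (lp n g) * Ep n g t s - \<i> * of_real (lm n g) * Em n g t s) / of_real (DD n g)
     = \<i> * ((of_real (real n) - 2) * pf n g t s + qf n g t s)"
    unfolding pf_def qf_def
    by (rule alg1[OF d0]) (simp_all add: lp_def lm_def dl_def)
  ultimately show ?thesis by simp
qed

lemma qf_deriv:
  assumes "2 \<le> n"
  shows "(qf n g t has_field_derivative \<i> * ((of_real (real n) - 1) * pf n g t s + of_real g * qf n g t s)) (at s within S)"
proof -
  have d0: "(of_real (DD n g) :: complex) \<noteq> 0" using DD_ge[OF assms, of g] by auto
  have "(qf n g t has_field_derivative (\<i> * of_real (lp n g) * Ep n g t s + \<i> * of_real (lm n g) * Em n g t s) / 2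
        + of_real (dl n g) * (\<i> * of_real (lp n g) * Ep n g t s - \<i> * of_real (lm n g) * Em n g t s) / (2 * of_real (DD n g))) (at s within S)"
    unfolding qf_def[abs_def]
    by (intro DERIV_add DERIV_cdivide DERIV_diff DERIV_cmult Ep_deriv Em_deriv)
  moreover have "(\<i> * of_real (lp n g) * Ep n g t s + \<i> * of_real (lm n g) * Em n g t s) / 2
        + of_real (dl n g) * (\<i> * of_real (lp n g) * Ep n g t s - \<i> * of_real (lm n g) * Em n g t s) / (2 * of_real (DD n g))
     = \<i> * ((of_real (real n) - 1) * pf n g t s + of_real g * qf n g t s)"
  proof -
    have sq: "(of_real (DD n g) :: complex) * of_real (DD n g) = of_real (dl n g) * of_real (dl n g) + 4 * (of_real (real n) - 1)"
    proof -
      have "DD n g * DD n g = dl n g * dl n g + 4 * (real n - 1)" by (rule DD_sq) (use assms in simp)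
      from arg_cong[OF this, of complex_of_real] show ?thesis by simp
    qed
    show ?thesis unfolding pf_def qf_def
      by (rule alg2[where a = "of_real (real n) - 2", OF d0 _ _ _ sq]) (simp_all add: lp_def lm_def dl_def)
  qed
  ultimately show ?thesis by simp
qed

lemma clique_row:
  assumes "2 \<le> n" "j \<in> {1..n-1}"
  shows "Happ n g w j = (\<Sum>l\<in>{1..n-1}. w l) + w n - w j"
proof -
  have "Happ n g w j = (\<Sum>l\<in>{1..n}. (if l = j then 0 else 1) * w l)"
    unfolding Happ_def using assms
    by (intro sum.cong) (auto simp: Hent_def max_def)
  also have "\<dots> = (\<Sum>l\<in>{1..n}. w l) - w j"
  proof -
    have jn: "j \<in> {1..n}" using assms by auto
    have "(\<Sum>l\<in>{1..n}. (if l = j then 0 else 1) * w l) = (if j = j then 0 else 1) * w j + (\<Sum>l\<in>{1..n}-{j}. (if l = j then 0 else 1) * w l)"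
      by (rule sum.remove[OF _ jn]) simp
    also have "(\<Sum>l\<in>{1..n}-{j}. (if l = j then 0 else 1) * w l) = (\<Sum>l\<in>{1..n}-{j}. w l)" by (intro sum.cong) auto
    also have "(\<Sum>l\<in>{1..n}. w l) = w j + (\<Sum>l\<in>{1..n}-{j}. w l)"
      by (rule sum.remove[OF _ jn]) simp
    ultimately show ?thesis by simp
  qed
  also have "(\<Sum>l\<in>{1..n}. w l) = (\<Sum>l\<in>{1..n-1}. w l) + w n"
    using assms by (cases n) (auto simp: atLeastAtMostSuc_conv)
  finally show ?thesis .
qed

lemma clique_sum:
  assumes "2 \<le> n"
  shows "(\<Sum>j\<in>{1..n-1}. Happ n g w j) = (of_real (real n) - 2) * (\<Sum>l\<in>{1..n-1}. w l) + (of_real (real n) - 1) * w n"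
proof -
  have "(\<Sum>j\<in>{1..n-1}. Happ n g w j) = (\<Sum>j\<in>{1..n-1}. (\<Sum>l\<in>{1..n-1}. w l) + w n - w j)"
    using assms by (intro sum.cong refl clique_row) auto
  also have "\<dots> = of_nat (n-1) * ((\<Sum>l\<in>{1..n-1}. w l) + w n) - (\<Sum>l\<in>{1..n-1}. w l)"
    by (simp add: sum_subtractf)
  also have "\<dots> = (of_real (real n) - 2) * (\<Sum>l\<in>{1..n-1}. w l) + (of_real (real n) - 1) * w n"
    using assms by (simp add: of_nat_diff algebra_simps)
  finally show ?thesis .
qed

lemma hub_row:
  assumes "2 \<le> n"
  shows "Happ n g w n = (\<Sum>l\<in>{1..n-1}. w l) + of_real g * w n + w (n+1)"
proof -
  have "Happ n g w n = (\<Sum>l\<in>{1..n+1}. Hent n g n l * w l)" unfolding Happ_def by simp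
  also have "\<dots> = (\<Sum>l\<in>{1..n-1}. Hent n g n l * w l) + Hent n g n n * w n + Hent n g n (n+1) * w (n+1)"
    using assms by (cases n) (auto simp: atLeastAtMostSuc_conv)
  also have "(\<Sum>l\<in>{1..n-1}. Hent n g n l * w l) = (\<Sum>l\<in>{1..n-1}. w l)"
    by (intro sum.cong refl) (auto simp: Hent_def)
  finally show ?thesis by (simp add: Hent_def)
qed

lemma Phi_deriv:
  assumes "2 \<le> n"
  shows "(Phi n g t has_field_derivative (- \<i> * qf n g t s * PP n g (n+1) (- \<i> * s))) (at s within S)"
proof -
  let ?Y = "\<lambda>j. PP n g j (- \<i> * s)"
  have n1: "1 \<le> n" using assms by simp
  have dA: "(AA n g has_field_derivative (\<Sum>j\<in>{1..n-1}. Happ n g ?Y j * (- \<i>))) (at s within S)"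
    unfolding AA_def[abs_def] by (intro DERIV_sum PPc_deriv)
  have eA: "(\<Sum>j\<in>{1..n-1}. Happ n g ?Y j * (- \<i>)) = - \<i> * ((of_real (real n) - 2) * AA n g s + (of_real (real n) - 1) * ?Y n)"
    unfolding sum_distrib_right[symmetric] clique_sum[OF assms] AA_def by (simp add: algebra_simps)
  have db: "((\<lambda>s. PP n g n (- \<i> * s)) has_field_derivative Happ n g ?Y n * (- \<i>)) (at s within S)"
    by (rule PPc_deriv)
  have eb: "Happ n g ?Y n * (- \<i>) = - \<i> * (AA n g s + of_real g * ?Y n + ?Y (n+1))"
    unfolding hub_row[OF assms] AA_def by (simp add: algebra_simps)
  have "(Phi n g t has_field_derivative
      pf n g t s * (\<Sum>j\<in>{1..n-1}. Happ n g ?Y j * (- \<i>)) + \<i> * ((of_real (real n) - 2) * pf n g t s + qf n g t s) * AA n g s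
      + (qf n g t s * (Happ n g ?Y n * (- \<i>)) + \<i> * ((of_real (real n) - 1) * pf n g t s + of_real g * qf n g t s) * ?Y n)) (at s within S)"
    unfolding Phi_def[abs_def]
    by (intro DERIV_add DERIV_mult' pf_deriv[OF assms] qf_deriv[OF assms] dA db)
  moreover have "pf n g t s * (\<Sum>j\<in>{1..n-1}. Happ n g ?Y j * (- \<i>)) + \<i> * ((of_real (real n) - 2) * pf n g t s + qf n g t s) * AA n g s
      + (qf n g t s * (Happ n g ?Y n * (- \<i>)) + \<i> * ((of_real (real n) - 1) * pf n g t s + of_real g * qf n g t s) * ?Y n)
      = - \<i> * qf n g t s * ?Y (n+1)"
    unfolding eA eb by (simp add: algebra_simps)
  ultimately show ?thesis by simp
qed

lemma Ep_real_norm: "cmod (Ep n g t (of_real \<sigma>)) = 1"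
proof -
  have "Ep n g t (of_real \<sigma>) = exp (\<i> * of_real (lp n g * (\<sigma> - t)))"
    unfolding Ep_def by (simp add: algebra_simps)
  thus ?thesis by simp
qed

lemma Em_real_norm: "cmod (Em n g t (of_real \<sigma>)) = 1"
proof -
  have "Em n g t (of_real \<sigma>) = exp (\<i> * of_real (lm n g * (\<sigma> - t)))"
    unfolding Em_def by (simp add: algebra_simps)
  thus ?thesis by simp
qed

lemma qf_bound:
  assumes "2 \<le> n"
  shows "cmod (qf n g t (of_real \<sigma>)) \<le> 1 + \<bar>dl n g\<bar> / DD n g"
proof -
  have D2: "2 \<le> DD n g" by (rule DD_ge[OF assms])
  let ?P = "Ep n g t (of_real \<sigma>)" and ?M = "Em n g t (of_real \<sigma>)"
  have "cmod ((?P + ?M) / 2) \<le> (cmod ?P + cmod ?M) / 2"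
    by (simp add: norm_divide norm_triangle_ineq divide_right_mono)
  hence a: "cmod ((?P + ?M) / 2) \<le> 1" by (simp add: Ep_real_norm Em_real_norm)
  have "cmod (?P - ?M) \<le> cmod ?P + cmod ?M" by (rule norm_triangle_ineq4)
  hence pm: "cmod (?P - ?M) \<le> 2" by (simp add: Ep_real_norm Em_real_norm)
  have "cmod (of_real (dl n g) * (?P - ?M) / (2 * of_real (DD n g))) = \<bar>dl n g\<bar> * cmod (?P - ?M) / (2 * DD n g)"
    using D2 by (simp add: norm_mult norm_divide)
  also have "\<dots> \<le> \<bar>dl n g\<bar> * 2 / (2 * DD n g)"
    using D2 pm by (intro divide_right_mono mult_left_mono) auto
  also have "\<dots> = \<bar>dl n g\<bar> / DD n g" by simp
  finally have b: "cmod (of_real (dl n g) * (?P - ?M) / (2 * of_real (DD n g))) \<le> \<bar>dl n g\<bar> / DD n g" .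
  show ?thesis unfolding qf_def
    using norm_triangle_ineq[of "(?P + ?M) / 2" "of_real (dl n g) * (?P - ?M) / (2 * of_real (DD n g))"] a b
    by linarith
qed

lemma Phi_end: "Phi n g t (of_real t) = PP n g n (- \<i> * of_real t)"
  unfolding Phi_def pf_def qf_def Ep_def Em_def by simp

lemma main_bound:
  assumes "2 \<le> n" "0 \<le> t"
  shows "cmod (PP n g n (- \<i> * of_real t) - Phi n g t 0) \<le> (1 + \<bar>dl n g\<bar> / DD n g) * t"
proof -
  let ?S = "closed_segment 0 (complex_of_real t)"
  have "cmod (Phi n g t (of_real t) - Phi n g t 0) \<le> (1 + \<bar>dl n g\<bar> / DD n g) * cmod (of_real t - 0)"
  proof (rule field_differentiable_bound[where S = ?S])
    show "convex ?S" by simp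
    show "(Phi n g t has_field_derivative (- \<i> * qf n g t z * PP n g (n+1) (- \<i> * z))) (at z within ?S)" for z
      by (rule Phi_deriv[OF assms(1)])
    show "cmod (- \<i> * qf n g t z * PP n g (n+1) (- \<i> * z)) \<le> 1 + \<bar>dl n g\<bar> / DD n g" if z: "z \<in> ?S" for z
    proof -
      obtain u where u: "0 \<le> u" "u \<le> 1" "z = (1 - u) *\<^sub>R 0 + u *\<^sub>R complex_of_real t"
        using z unfolding in_segment by blast
      have zs: "z = of_real (u * t)" using u(3) by (simp add: scaleR_conv_of_real)
      have s0: "0 \<le> u * t" using u assms by simp
      have "cmod (- \<i> * qf n g t z * PP n g (n+1) (- \<i> * z)) = cmod (qf n g t z) * cmod (PP n g (n+1) (- \<i> * z))"
        by (simp add: norm_mult)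
      also have "\<dots> \<le> (1 + \<bar>dl n g\<bar> / DD n g) * 1"
        unfolding zs
        by (rule mult_mono[OF qf_bound[OF assms(1)] energy]) (use assms s0 DD_ge[OF assms(1), of g] in \<open>auto intro!: add_nonneg_nonneg divide_nonneg_nonneg\<close>)
      finally show ?thesis by simp
    qed
  qed simp_all
  thus ?thesis using assms(2) by (simp add: Phi_end)
qed

definition ap :: "nat \<Rightarrow> real \<Rightarrow> real" where
  "ap n g = ((real n - 1) / DD n g + 1/2 + dl n g / (2 * DD n g)) / sqrt (real n)"
definition am :: "nat \<Rightarrow> real \<Rightarrow> real" where
  "am n g = (- (real n - 1) / DD n g + 1/2 - dl n g / (2 * DD n g)) / sqrt (real n)"

lemma Phi_start:
  assumes "2 \<le> n"
  shows "cmod (Phi n g t 0) = cmod (of_real (ap n g) + of_real (am n g) * exp (\<i> * of_real (DD n g * t)))"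
proof -
  have D2: "2 \<le> DD n g" by (rule DD_ge[OF assms])
  have A0: "AA n g 0 = of_nat (n - 1) * of_real (1 / sqrt (real n))"
  proof -
    have "AA n g 0 = (\<Sum>j\<in>{1..n-1}. of_real (1 / sqrt (real n)))"
      unfolding AA_def by (intro sum.cong) (auto simp: PP_zero z1_def)
    thus ?thesis by simp
  qed
  have b0: "PP n g n 0 = of_real (1 / sqrt (real n))"
    using assms by (simp add: PP_zero z1_def)
  let ?P = "Ep n g t 0" and ?M = "Em n g t 0"
  have M: "?M = ?P * exp (\<i> * of_real (DD n g * t))"
  proof -
    have r: "lm n g * (0 - t) = lp n g * (0 - t) + DD n g * t"
      unfolding lp_def lm_def by (simp add: field_simps)
    have "\<i> * of_real (lm n g) * (0 - of_real t) = \<i> * of_real (lp n g) * (0 - of_real t) + \<i> * of_real (DD n g * t)"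
      using arg_cong[OF r, of "\<lambda>x. \<i> * complex_of_real x"] by (simp add: algebra_simps)
    thus ?thesis unfolding Ep_def Em_def by (simp only: exp_add[symmetric])
  qed
  have "Phi n g t 0 = ?P * of_real (ap n g) + ?M * of_real (am n g)"
    unfolding Phi_def pf_def qf_def A0 b0 ap_def am_def using D2 assms
    by (simp add: b0 of_nat_diff field_simps)
  also have "\<dots> = ?P * (of_real (ap n g) + of_real (am n g) * exp (\<i> * of_real (DD n g * t)))"
    unfolding M by (simp add: algebra_simps)
  finally show ?thesis using Ep_real_norm[of n g t 0] by (simp add: norm_mult)
qed

lemma expH_PP: "expH n g t (z1 n) n = PP n g n (- \<i> * of_real t)"
proof -
  have "(\<lambda>m. ((- \<i> * complex_of_real t) ^ m / of_nat (fact m)) * ((Happ n g ^^ m) (z1 n)) n)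
      = (\<lambda>m. (cm n g m n / of_nat (fact m)) * (- \<i> * of_real t) ^ m)"
    by (rule ext) (simp add: cm_def)
  thus ?thesis unfolding expH_def PP_def by simp
qed

lemma sqrt_inv_lim: "(\<lambda>n. sqrt (1 / real n)) \<longlonglongrightarrow> 0"
proof -
  have "(\<lambda>n. sqrt (1 / real n)) \<longlonglongrightarrow> sqrt 0"
    by (intro tendsto_intros)
  thus ?thesis by simp
qed

lemma bounded_over_n:
  fixes f :: "nat \<Rightarrow> real"
  assumes "\<And>n. \<bar>f n\<bar> \<le> B"
  shows "(\<lambda>n. f n / real n) \<longlonglongrightarrow> 0"
proof (rule Lim_null_comparison)
  show "\<forall>\<^sub>F n in sequentially. norm (f n / real n) \<le> B / real n"
    using assms by (intro always_eventually allI) (simp add: abs_divide divide_right_mono)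
  show "(\<lambda>n. B / real n) \<longlonglongrightarrow> 0" by (rule lim_const_over_n)
qed

theorem mainTheorem2:
  fixes \<gamma> :: "nat \<Rightarrow> real"
  assumes "\<exists>C. \<forall>n. \<bar>\<gamma> n - real n\<bar> \<le> C"
  shows "(\<lambda>n. cmod (expH n (\<gamma> n) (pi / (2 * sqrt (real n))) (z1 n) n)) \<longlonglongrightarrow> 1"
proof -
  obtain C where C: "\<And>n. \<bar>\<gamma> n - real n\<bar> \<le> C" using assms by blast
  define d where "d n = dl n (\<gamma> n)" for n
  define tt where "tt n = pi / (2 * sqrt (real n))" for n
  define r where "r n = DD n (\<gamma> n) / sqrt (real n)" for n
  have dB: "\<bar>d n\<bar> \<le> C + 2" for n
    using C[of n] unfolding d_def dl_def by linarith
  have d2B: "\<bar>(d n)^2\<bar> \<le> (C + 2)^2" for n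
    using power_mono[OF dB[of n] abs_ge_zero, of 2] by simp
  have lim_d2: "(\<lambda>n. (d n)^2 / real n) \<longlonglongrightarrow> 0" by (rule bounded_over_n[OF d2B])
  have lim_d: "(\<lambda>n. d n / real n) \<longlonglongrightarrow> 0" by (rule bounded_over_n[OF dB])
  have ev1: "\<forall>\<^sub>F n in sequentially. 1 \<le> n" by (rule eventually_ge_at_top)
  have ev2: "\<forall>\<^sub>F n in sequentially. 2 \<le> n" by (rule eventually_ge_at_top)
  have "(\<lambda>n. sqrt ((d n)^2 / real n + 4 - 4 * (1 / real n))) \<longlonglongrightarrow> sqrt (0 + 4 - 4 * 0)"
    by (intro tendsto_intros lim_d2)
  hence "(\<lambda>n. sqrt ((d n)^2 / real n + 4 - 4 * (1 / real n))) \<longlonglongrightarrow> 2" by simp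
  moreover have "\<forall>\<^sub>F n in sequentially. sqrt ((d n)^2 / real n + 4 - 4 * (1 / real n)) = r n"
    using ev1
  proof eventually_elim
    case (elim n)
    have "(d n)^2 / real n + 4 - 4 * (1 / real n) = ((d n)^2 + 4 * (real n - 1)) / real n"
      using elim by (simp add: field_simps)
    thus ?case unfolding r_def DD_def d_def by (simp add: real_sqrt_divide)
  qed
  ultimately have lim_r: "r \<longlonglongrightarrow> 2" by (rule Lim_transform_eventually)
  have "(\<lambda>n. r n * pi / 2) \<longlonglongrightarrow> 2 * pi / 2" by (intro tendsto_intros lim_r) simp
  hence "(\<lambda>n. r n * pi / 2) \<longlonglongrightarrow> pi" by simp
  moreover have "\<forall>\<^sub>F n in sequentially. r n * pi / 2 = DD n (\<gamma> n) * tt n"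
    using ev1 by eventually_elim (simp add: r_def tt_def)
  ultimately have lim_ph: "(\<lambda>n. DD n (\<gamma> n) * tt n) \<longlonglongrightarrow> pi" by (rule Lim_transform_eventually)
  have ap_eq: "ap n (\<gamma> n) = (1 - 1 / real n) / r n + sqrt (1 / real n) / 2 + (d n / real n) / (2 * r n)"
    and am_eq: "am n (\<gamma> n) = - ((1 - 1 / real n) / r n) + sqrt (1 / real n) / 2 - (d n / real n) / (2 * r n)"
    if n2: "2 \<le> n" for n
  proof -
    define s where "s = sqrt (real n)"
    have s0: "0 < s" using n2 by (simp add: s_def)
    have ns: "real n = s * s" using n2 by (simp add: s_def)
    have D0: "0 < DD n (\<gamma> n)" using DD_ge[OF n2, of "\<gamma> n"] by simp
    have si: "sqrt (1 / real n) = 1 / s" by (simp add: s_def real_sqrt_divide)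
    show "ap n (\<gamma> n) = (1 - 1 / real n) / r n + sqrt (1 / real n) / 2 + (d n / real n) / (2 * r n)"
      unfolding ap_def r_def d_def si unfolding s_def[symmetric] unfolding ns using s0 D0 by (simp add: field_simps)
    show "am n (\<gamma> n) = - ((1 - 1 / real n) / r n) + sqrt (1 / real n) / 2 - (d n / real n) / (2 * r n)"
      unfolding am_def r_def d_def si unfolding s_def[symmetric] unfolding ns using s0 D0 by (simp add: field_simps)
  qed
  have "(\<lambda>n. (1 - 1 / real n) / r n + sqrt (1 / real n) / 2 + (d n / real n) / (2 * r n)) \<longlonglongrightarrow> (1 - 0) / 2 + 0 / 2 + 0 / (2 * 2)"
    by (intro tendsto_intros lim_r lim_d sqrt_inv_lim) simp_all
  hence l: "(\<lambda>n. (1 - 1 / real n) / r n + sqrt (1 / real n) / 2 + (d n / real n) / (2 * r n)) \<longlonglongrightarrow> 1/2" by simp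
  have lim_ap: "(\<lambda>n. ap n (\<gamma> n)) \<longlonglongrightarrow> 1/2"
    by (rule Lim_transform_eventually[OF l]) (use ev2 in \<open>eventually_elim, simp add: ap_eq\<close>)
  have "(\<lambda>n. - ((1 - 1 / real n) / r n) + sqrt (1 / real n) / 2 - (d n / real n) / (2 * r n)) \<longlonglongrightarrow> - ((1 - 0) / 2) + 0 / 2 - 0 / (2 * 2)"
    by (intro tendsto_intros lim_r lim_d sqrt_inv_lim) simp_all
  hence l: "(\<lambda>n. - ((1 - 1 / real n) / r n) + sqrt (1 / real n) / 2 - (d n / real n) / (2 * r n)) \<longlonglongrightarrow> - 1/2" by simp
  have lim_am: "(\<lambda>n. am n (\<gamma> n)) \<longlonglongrightarrow> - 1/2"
    by (rule Lim_transform_eventually[OF l]) (use ev2 in \<open>eventually_elim, simp add: am_eq\<close>)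
  have "(\<lambda>n. cmod (of_real (ap n (\<gamma> n)) + of_real (am n (\<gamma> n)) * exp (\<i> * of_real (DD n (\<gamma> n) * tt n))))
      \<longlonglongrightarrow> cmod (of_real (1/2) + of_real (- 1/2) * exp (\<i> * of_real pi))"
    by (intro tendsto_intros lim_ap lim_am lim_ph)
  hence lim_G: "(\<lambda>n. cmod (of_real (ap n (\<gamma> n)) + of_real (am n (\<gamma> n)) * exp (\<i> * of_real (DD n (\<gamma> n) * tt n)))) \<longlonglongrightarrow> 1"
    by simp
  have lim_t: "(\<lambda>n. (1 + (C + 2) / 2) * tt n) \<longlonglongrightarrow> (1 + (C + 2) / 2) * (pi / 2 * 0)"
  proof -
    have "(\<lambda>n. (1 + (C + 2) / 2) * (pi / 2 * sqrt (1 / real n))) \<longlonglongrightarrow> (1 + (C + 2) / 2) * (pi / 2 * 0)"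
      by (intro tendsto_intros sqrt_inv_lim)
    moreover have "\<forall>\<^sub>F n in sequentially. (1 + (C + 2) / 2) * (pi / 2 * sqrt (1 / real n)) = (1 + (C + 2) / 2) * tt n"
      using ev1 by eventually_elim (simp add: tt_def real_sqrt_divide)
    ultimately show ?thesis by (rule Lim_transform_eventually)
  qed
  let ?F = "\<lambda>n. cmod (expH n (\<gamma> n) (pi / (2 * sqrt (real n))) (z1 n) n)"
  let ?G = "\<lambda>n. cmod (of_real (ap n (\<gamma> n)) + of_real (am n (\<gamma> n)) * exp (\<i> * of_real (DD n (\<gamma> n) * tt n)))"
  have "(\<lambda>n. ?F n - ?G n) \<longlonglongrightarrow> 0"
  proof (rule Lim_null_comparison)
    show "(\<lambda>n. (1 + (C + 2) / 2) * tt n) \<longlonglongrightarrow> 0" using lim_t by simp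
    show "\<forall>\<^sub>F n in sequentially. norm (?F n - ?G n) \<le> (1 + (C + 2) / 2) * tt n"
      using ev2
    proof eventually_elim
      case (elim n)
      have t0: "0 \<le> tt n" by (simp add: tt_def)
      have D2: "2 \<le> DD n (\<gamma> n)" by (rule DD_ge[OF elim])
      have "\<bar>d n\<bar> / DD n (\<gamma> n) \<le> (C + 2) / 2"
      proof -
        have "\<bar>d n\<bar> / DD n (\<gamma> n) \<le> \<bar>d n\<bar> / 2"
          by (rule divide_left_mono) (use D2 in auto)
        moreover have "\<bar>d n\<bar> / 2 \<le> (C + 2) / 2" by (rule divide_right_mono[OF dB]) simp
        ultimately show ?thesis by (rule order_trans)
      qed
      hence "(1 + \<bar>dl n (\<gamma> n)\<bar> / DD n (\<gamma> n)) * tt n \<le> (1 + (C + 2) / 2) * tt n"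
        using t0 by (intro mult_right_mono) (auto simp: d_def)
      moreover have "norm (?F n - ?G n) \<le> cmod (PP n (\<gamma> n) n (- \<i> * of_real (tt n)) - Phi n (\<gamma> n) (tt n) 0)"
        unfolding expH_PP tt_def[symmetric] Phi_start[OF elim, symmetric] real_norm_def
        by (rule norm_triangle_ineq3)
      moreover have "cmod (PP n (\<gamma> n) n (- \<i> * of_real (tt n)) - Phi n (\<gamma> n) (tt n) 0) \<le> (1 + \<bar>dl n (\<gamma> n)\<bar> / DD n (\<gamma> n)) * tt n"
        by (rule main_bound[OF elim t0])
      ultimately show ?case by linarith
    qed
  qed
  hence "(\<lambda>n. (?F n - ?G n) + ?G n) \<longlonglongrightarrow> 0 + 1" by (intro tendsto_add lim_G)
  thus ?thesis by simp
qed

end
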